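(* Let $k>1$, let $f$ be a positive function, differentiable on $[0,1]$, and define $g(R)=\dfrac{k-1}{\frac{k-1}{k}-R}$ for $R\neq\frac{k-1}{k}$. Consider the planar system $$\frac{dI}{d\tau}=I\,[f(R)(1-I-R)-k],\qquad \frac{dR}{d\tau}=(k-1)I-R,$$ and let $(I^*,R^* )$ be an endemic equilibrium point of it. If $$\frac{df}{dR}(R^* )<\frac{dg}{dR}(R^* )\quad\left(\text{equivalently } <\tfrac{1}{k-1}g^2(R^* ),\ \text{equivalently } <\tfrac{1}{k-1}f^2(R^* )\right),$$ then $(I^*,R^* )$ is a locally stable equilibrium point. If $$\frac{df}{dR}(R^* )>\frac{dg}{dR}(R^* )\quad\left(\text{equivalently } >\tfrac{1}{k-1}g^2(R^* ),\ \text{equivalently } >\tfrac{1}{k-1}f^2(R^* )\right),$$ then $(I^*,R^* )$ is a local saddle point.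
   Context: An endemic equilibrium is an equilibrium point $(I^*,R^* )$ of the system with $I^*>0$. "Locally stable" means locally asymptotically stable (both eigenvalues of the Jacobian at the point have negative real part); "saddle" means the Jacobian at the point has one positive and one negative real eigenvalue. *)

theory Defs
  imports "HOL-Analysis.Analysis"
begin

text \<open>Planar autonomous system  x' = P x y, y' = Q x y.
  Jacobian matrix at (x,y), built from the partial derivatives.\<close>
definition jac2 :: "(real \<Rightarrow> real \<Rightarrow> real) \<Rightarrow> (real \<Rightarrow> real \<Rightarrow> real) \<Rightarrow> real \<Rightarrow> real \<Rightarrow> real^2^2" where
  "jac2 P Q x y =
     vector [vector [deriv (\<lambda>s. P s y) x, deriv (\<lambda>s. P x s) y],
             vector [deriv (\<lambda>s. Q s y) x, deriv (\<lambda>s. Q x s) y]]"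

definition is_eigenvalue2 :: "real^2^2 \<Rightarrow> complex \<Rightarrow> bool" where
  "is_eigenvalue2 A \<mu> \<longleftrightarrow>
     (\<exists>v :: complex^2. v \<noteq> 0 \<and> (\<chi> i j. complex_of_real (A $ i $ j)) *v v = \<mu> *s v)"

definition is_equilibrium :: "(real \<Rightarrow> real \<Rightarrow> real) \<Rightarrow> (real \<Rightarrow> real \<Rightarrow> real) \<Rightarrow> real \<Rightarrow> real \<Rightarrow> bool" where
  "is_equilibrium P Q x y \<longleftrightarrow> P x y = 0 \<and> Q x y = 0"

definition locally_stable :: "(real \<Rightarrow> real \<Rightarrow> real) \<Rightarrow> (real \<Rightarrow> real \<Rightarrow> real) \<Rightarrow> real \<Rightarrow> real \<Rightarrow> bool" where
  "locally_stable P Q x y \<longleftrightarrow> is_equilibrium P Q x y \<and>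
     (\<forall>\<mu>. is_eigenvalue2 (jac2 P Q x y) \<mu> \<longrightarrow> Re \<mu> < 0)"

definition saddle :: "(real \<Rightarrow> real \<Rightarrow> real) \<Rightarrow> (real \<Rightarrow> real \<Rightarrow> real) \<Rightarrow> real \<Rightarrow> real \<Rightarrow> bool" where
  "saddle P Q x y \<longleftrightarrow> is_equilibrium P Q x y \<and>
     (\<exists>\<mu>1 \<mu>2 :: real. \<mu>1 > 0 \<and> \<mu>2 < 0 \<and>
        is_eigenvalue2 (jac2 P Q x y) (complex_of_real \<mu>1) \<and>
        is_eigenvalue2 (jac2 P Q x y) (complex_of_real \<mu>2))"

end

theory Submission
  imports Defs
begin

lemma eig_char:
  assumes "is_eigenvalue2 (vector [vector [a, b], vector [c, e]]) \<mu>"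
  shows "\<mu>^2 - of_real (a+e) * \<mu> + of_real (a*e - b*c) = 0"
proof -
  obtain v :: "complex^2" where v: "v \<noteq> 0"
    and h: "(\<chi> i j. complex_of_real ((vector [vector [a, b], vector [c, e]] :: real^2^2) $ i $ j)) *v v = \<mu> *s v"
    using assms unfolding is_eigenvalue2_def by blast
  have h1: "(of_real a - \<mu>) * v$1 + of_real b * v$2 = 0"
    using arg_cong[OF h, of "\<lambda>w. w $ 1"] by (simp add: matrix_vector_mult_def sum_2 algebra_simps)
  have h2: "of_real c * v$1 + (of_real e - \<mu>) * v$2 = 0"
    using arg_cong[OF h, of "\<lambda>w. w $ 2"] by (simp add: matrix_vector_mult_def sum_2 algebra_simps)
  define D where "D = \<mu>^2 - of_real (a+e) * \<mu> + of_real (a*e - b*c)"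
  have "D * v$1 = (of_real e - \<mu>) * ((of_real a - \<mu>) * v$1 + of_real b * v$2) - of_real b * (of_real c * v$1 + (of_real e - \<mu>) * v$2)"
    unfolding D_def by (simp add: algebra_simps power2_eq_square)
  hence d1: "D * v$1 = 0" using h1 h2 by simp
  have "D * v$2 = (of_real a - \<mu>) * (of_real c * v$1 + (of_real e - \<mu>) * v$2) - of_real c * ((of_real a - \<mu>) * v$1 + of_real b * v$2)"
    unfolding D_def by (simp add: algebra_simps power2_eq_square)
  hence d2: "D * v$2 = 0" using h1 h2 by simp
  have "v$1 \<noteq> 0 \<or> v$2 \<noteq> 0"
  proof (rule ccontr)
    assume "\<not> (v$1 \<noteq> 0 \<or> v$2 \<noteq> 0)"
    hence "v = 0" by (simp add: vec_eq_iff forall_2)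
    thus False using v by simp
  qed
  thus ?thesis using d1 d2 unfolding D_def by auto
qed

lemma eig_real:
  fixes \<mu> :: real
  assumes "c \<noteq> 0" "\<mu>^2 - (a+e) * \<mu> + (a*e - b*c) = 0"
  shows "is_eigenvalue2 (vector [vector [a, b], vector [c, e]]) (of_real \<mu>)"
  unfolding is_eigenvalue2_def
proof (intro exI conjI)
  let ?v = "vector [complex_of_real (\<mu> - e), of_real c] :: complex^2"
  show "?v \<noteq> 0"
  proof
    assume "?v = 0"
    hence "?v $ 2 = 0" by simp
    thus False using assms(1) by simp
  qed
  have r1: "a*(\<mu>-e) + b*c = \<mu>*(\<mu>-e)" using assms(2) by (simp add: algebra_simps power2_eq_square)
  have r1': "complex_of_real a * of_real (\<mu>-e) + of_real b * of_real c = of_real \<mu> * of_real (\<mu>-e)"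
    by (metis r1 of_real_add of_real_mult)
  show "(\<chi> i j. complex_of_real ((vector [vector [a, b], vector [c, e]] :: real^2^2) $ i $ j)) *v ?v = of_real \<mu> *s ?v"
    unfolding vec_eq_iff forall_2
    using r1' by (simp add: matrix_vector_mult_def sum_2 algebra_simps)
qed

lemma stable_eig:
  assumes "t < 0" "d > 0" "\<mu>^2 - of_real t * \<mu> + of_real d = (0::complex)"
  shows "Re \<mu> < 0"
proof -
  have re: "(Re \<mu>)^2 - (Im \<mu>)^2 - t * Re \<mu> + d = 0"
    using arg_cong[OF assms(3), of Re] by (simp add: power2_eq_square)
  have im: "2 * Re \<mu> * Im \<mu> - t * Im \<mu> = 0"
    using arg_cong[OF assms(3), of Im] by (simp add: power2_eq_square)
  show ?thesis
  proof (cases "Im \<mu> = 0")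
    case True
    show ?thesis
    proof (rule ccontr)
      assume "\<not> Re \<mu> < 0"
      hence "t * Re \<mu> \<le> 0" using assms(1) by (simp add: mult_nonpos_nonneg)
      moreover have "(Re \<mu>)^2 \<ge> 0" by simp
      moreover have "(Im \<mu>)^2 = 0" using True by simp
      ultimately show False using re assms(2) by linarith
    qed
  next
    case False
    have "(2 * Re \<mu> - t) * Im \<mu> = 0" using im by (simp add: algebra_simps)
    then have "2 * Re \<mu> - t = 0" using False by simp
    then show ?thesis using assms by simp
  qed
qed


lemma saddle_roots:
  fixes t d :: real
  assumes "d < 0"
  shows "\<exists>m1 m2. m1 > 0 \<and> m2 < 0 \<and> m1^2 - t*m1 + d = 0 \<and> m2^2 - t*m2 + d = 0"
proof -
  define s where "s = sqrt (t^2 - 4*d)"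
  have nn: "t^2 - 4*d \<ge> 0" using assms zero_le_power2[of t] by linarith
  hence s2: "s^2 = t^2 - 4*d" unfolding s_def by simp
  have sp: "s \<ge> 0" unfolding s_def using nn by simp
  have "s^2 > t^2" using s2 assms by linarith
  hence sgt: "s > \<bar>t\<bar>" using sp power_less_imp_less_base[of "\<bar>t\<bar>" 2 s] by simp
  show ?thesis
  proof (intro exI conjI)
    show "(t + s)/2 > 0" using sgt by simp
    show "(t - s)/2 < 0" using sgt by simp
    show "((t + s)/2)^2 - t*((t + s)/2) + d = 0" using s2 by (simp add: power2_eq_square field_simps)
    show "((t - s)/2)^2 - t*((t - s)/2) + d = 0" using s2 by (simp add: power2_eq_square field_simps)
  qed
qed

theorem theorem3:
  fixes k :: real and f :: "real \<Rightarrow> real" and Is Rs :: real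
  defines "g \<equiv> (\<lambda>R. (k - 1) / ((k - 1) / k - R))"
      and "P \<equiv> (\<lambda>I R. I * (f R * (1 - I - R) - k))"
      and "Q \<equiv> (\<lambda>I R. (k - 1) * I - R)"
  assumes k: "k > 1"
      and fpos: "\<forall>x\<in>{0..1}. f x > 0"
      and fdiff: "f differentiable_on {0..1}"
      and eq: "is_equilibrium P Q Is Rs"
      and endemic: "Is > 0"
      and Rdom: "Rs \<in> {0..1}"
  shows "(deriv f Rs < deriv g Rs \<longrightarrow> locally_stable P Q Is Rs)
       \<and> (deriv f Rs > deriv g Rs \<longrightarrow> saddle P Q Is Rs)"
proof -
  define F where "F = f Rs"
  define F' where "F' = deriv f Rs"
  have Fp: "F > 0" using fpos Rdom F_def by auto
  have e1: "F * (1 - Is - Rs) = k" using eq endemic unfolding is_equilibrium_def P_def F_def by simp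
  have e2: "Rs = (k - 1) * Is" using eq unfolding is_equilibrium_def Q_def by simp
  have Rpos: "Rs > 0" using e2 k endemic by simp
  have "1 - Is - Rs > 0"
  proof (rule ccontr)
    assume "\<not> 1 - Is - Rs > 0"
    hence "F * (1 - Is - Rs) \<le> 0" using Fp by (simp add: mult_nonneg_nonpos)
    thus False using e1 k by simp
  qed
  hence R1: "Rs < 1" using endemic by simp
  have int: "Rs \<in> interior {0..1::real}" using Rpos R1 by simp
  have dw: "f differentiable (at Rs within {0..1})" using fdiff Rdom
    unfolding differentiable_on_def by blast
  have "f differentiable (at Rs)" using dw unfolding at_within_interior[OF int] .
  hence df: "(f has_real_derivative F') (at Rs)" unfolding F'_def
    using DERIV_deriv_iff_real_differentiable by blast
  have om: "1 - Is - Rs = k / F" using e1 Fp by (simp add: field_simps)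
  have den: "(k - 1) / k - Rs = (k - 1) / F"
  proof -
    have "Is = Rs / (k - 1)" using e2 k by simp
    hence "1 - Rs / (k - 1) - Rs = k / F" using om by simp
    thus ?thesis using k Fp by (simp add: field_simps)
  qed
  have dnz: "(k - 1) / k - Rs \<noteq> 0" using den k Fp by simp
  have "(g has_real_derivative (k - 1) / ((k - 1) / k - Rs)^2) (at Rs)"
    unfolding g_def using dnz
    by (auto intro!: derivative_eq_intros simp: power2_eq_square)
  hence "deriv g Rs = (k - 1) / ((k - 1) / k - Rs)^2" by (rule DERIV_imp_deriv)
  hence "deriv g Rs = (k - 1) / ((k - 1) / F)^2" using den by simp
  also have "\<dots> = ((k - 1) * F^2) / ((k - 1) * (k - 1))"
    by (simp add: power_divide power2_eq_square)
  also have "\<dots> = F^2 / (k - 1)" using k by simp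
  finally have dg: "deriv g Rs = F^2 / (k - 1)" .
  define a where "a = F * (1 - Is - Rs) - k - Is * F"
  define b where "b = Is * (F' * (1 - Is - Rs) - F)"
  have "((\<lambda>s. P s Rs) has_real_derivative a) (at Is)"
    unfolding P_def a_def F_def by (auto intro!: derivative_eq_intros simp: algebra_simps)
  hence ja: "deriv (\<lambda>s. P s Rs) Is = a" by (rule DERIV_imp_deriv)
  have "((\<lambda>s. P Is s) has_real_derivative b) (at Rs)"
    unfolding P_def b_def F_def using df
    by (auto intro!: derivative_eq_intros simp: algebra_simps F_def)
  hence jb: "deriv (\<lambda>s. P Is s) Rs = b" by (rule DERIV_imp_deriv)
  have "((\<lambda>s. Q s Rs) has_real_derivative (k - 1)) (at Is)"
    unfolding Q_def by (auto intro!: derivative_eq_intros)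
  hence jc: "deriv (\<lambda>s. Q s Rs) Is = k - 1" by (rule DERIV_imp_deriv)
  have "((\<lambda>s. Q Is s) has_real_derivative (-1)) (at Rs)"
    unfolding Q_def by (auto intro!: derivative_eq_intros)
  hence je: "deriv (\<lambda>s. Q Is s) Rs = -1" by (rule DERIV_imp_deriv)
  have J: "jac2 P Q Is Rs = vector [vector [a, b], vector [k - 1, -1]]"
    unfolding jac2_def ja jb jc je ..
  have aa: "a = - Is * F" unfolding a_def using e1 by simp
  have det: "a * (-1) - b * (k - 1) = Is * k / F * (F^2 - (k - 1) * F')"
    unfolding aa b_def om using Fp by (simp add: field_simps power2_eq_square)
  have "Is * F > 0" using endemic Fp by simp
  hence tr: "a + (-1) < 0" using aa by simp
  have pos: "Is * k / F > 0" using endemic k Fp by simp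
  show ?thesis
  proof (intro conjI impI)
    assume "deriv f Rs < deriv g Rs"
    hence "(k - 1) * F' < F^2" using k unfolding dg F'_def by (simp add: field_simps)
    hence "F^2 - (k - 1) * F' > 0" by simp
    hence dpos: "a * (-1) - b * (k - 1) > 0" unfolding det by (rule mult_pos_pos[OF pos])
    show "locally_stable P Q Is Rs"
      unfolding locally_stable_def
    proof (intro conjI allI impI)
      show "is_equilibrium P Q Is Rs" by (rule eq)
      fix \<mu> assume "is_eigenvalue2 (jac2 P Q Is Rs) \<mu>"
      hence "\<mu>^2 - of_real (a + (-1)) * \<mu> + of_real (a * (-1) - b * (k - 1)) = 0"
        unfolding J by (rule eig_char)
      thus "Re \<mu> < 0" using stable_eig[OF tr dpos] by blast
    qed
  next
    assume "deriv f Rs > deriv g Rs"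
    hence "(k - 1) * F' > F^2" using k unfolding dg F'_def by (simp add: field_simps)
    hence "F^2 - (k - 1) * F' < 0" by simp
    hence dneg: "a * (-1) - b * (k - 1) < 0" unfolding det by (rule mult_pos_neg[OF pos])
    obtain m1 m2 where m: "m1 > 0" "m2 < 0"
      "m1^2 - (a + (-1))*m1 + (a * (-1) - b * (k - 1)) = 0"
      "m2^2 - (a + (-1))*m2 + (a * (-1) - b * (k - 1)) = 0"
      using saddle_roots[OF dneg] by blast
    have c0: "k - 1 \<noteq> 0" using k by simp
    show "saddle P Q Is Rs" unfolding saddle_def J
      using eq m eig_real[OF c0 m(3)] eig_real[OF c0 m(4)] by blast
  qed
qed

end
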